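(* Let $s,t,m$ be positive integers with $s\le t$, $s\mid m$, $m\ge t+2$, let $n=m^2$, and let $z=s(\lceil (t+2)/s\rceil-1)$. Let $v(0),\dots,v(m-1)$ be integers with $0\le v(j)\le t-1-(j\bmod s)$ for all $j$ and $v(j)=0$ for $m-z\le j\le m-1$. Then, for any initial configuration of distinct cell values $c_0,\dots,c_{n-1}$, the Block Algorithm (described in the context) terminates, and during its repeat-loop each of the cells $c_0,c_1,\dots,c_{m-3}$ is pushed exactly once.
   Context: Cells $c_0,\dots,c_{n-1}$ are real numbers (indices modulo $n$). For $0\le j\le n-1$ let $l(j)=s\lceil (j-t+1)/s\rceil \bmod n$ and $r(j)=(s\lfloor j/s\rfloor+t-1)\bmod n$. Pushing cell $j$ ("push-to-the-top") replaces $c_j$ by $\max\{c_{l(j)},c_{l(j)+1},\dots,c_{r(j)}\}+1$ (indices cyclic), leaving other cells unchanged. For $0\le j\le m-3$ define $l'(j)=l(j)$ if $0\le l(j)\le m-3$ and $l'(j)=0$ otherwise, and $r'(j)=r(j)$ if $0\le r(j)\le m-3$ and $r'(j)=m-3$ otherwise. Block Algorithm: (1) push cell $n-1$; (2) set $a_k\leftarrow 0$ for $k=0,\dots,m-3$ and $j\leftarrow 0$; (3) repeat: if $v(j)=\sum_{i=j+1}^{r'(j)}a_i$ and $a_j=0$, then push cell $j$, set $a_j\leftarrow 1$ and $j\leftarrow l'(j)$; otherwise set $j\leftarrow j+1$; until $j=m-2$; (4) push cell $m-2$. *)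

theory Defs
  imports Complex_Main
begin

text \<open>Cells are indexed by 0..n-1 (n = m^2); a configuration is c :: nat => real.\<close>

definition lfun :: "nat \<Rightarrow> nat \<Rightarrow> nat \<Rightarrow> nat \<Rightarrow> nat" where
  "lfun s t n j = nat ((int s * \<lceil>(real j - real t + 1) / real s\<rceil>) mod int n)"

definition rfun :: "nat \<Rightarrow> nat \<Rightarrow> nat \<Rightarrow> nat \<Rightarrow> nat" where
  "rfun s t n j = nat ((int s * \<lfloor>real j / real s\<rfloor> + int t - 1) mod int n)"

text \<open>Cyclic index range l, l+1, ..., r (mod n).\<close>
definition cyc_range :: "nat \<Rightarrow> nat \<Rightarrow> nat \<Rightarrow> nat set" where
  "cyc_range n l r = {(l + k) mod n | k. k \<le> (r + n - l) mod n}"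

definition push :: "nat \<Rightarrow> nat \<Rightarrow> nat \<Rightarrow> (nat \<Rightarrow> real) \<Rightarrow> nat \<Rightarrow> (nat \<Rightarrow> real)" where
  "push s t n c j = c(j := Max (c ` cyc_range n (lfun s t n j) (rfun s t n j)) + 1)"

definition lprime :: "nat \<Rightarrow> nat \<Rightarrow> nat \<Rightarrow> nat \<Rightarrow> nat" where
  "lprime s t m j = (if lfun s t (m^2) j \<le> m - 3 then lfun s t (m^2) j else 0)"

definition rprime :: "nat \<Rightarrow> nat \<Rightarrow> nat \<Rightarrow> nat \<Rightarrow> nat" where
  "rprime s t m j = (if rfun s t (m^2) j \<le> m - 3 then rfun s t (m^2) j else m - 3)"

definition block_cond :: "nat \<Rightarrow> nat \<Rightarrow> nat \<Rightarrow> (nat \<Rightarrow> int) \<Rightarrow> (nat \<Rightarrow> int) \<Rightarrow> nat \<Rightarrow> bool" where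
  "block_cond s t m v a j \<longleftrightarrow> v j = (\<Sum>i\<in>{j+1..rprime s t m j}. a i) \<and> a j = 0"

definition block_step :: "nat \<Rightarrow> nat \<Rightarrow> nat \<Rightarrow> (nat \<Rightarrow> int)
    \<Rightarrow> (nat \<Rightarrow> real) \<times> (nat \<Rightarrow> int) \<times> nat \<Rightarrow> (nat \<Rightarrow> real) \<times> (nat \<Rightarrow> int) \<times> nat" where
  "block_step s t m v st = (case st of (c, a, j) \<Rightarrow>
     (if block_cond s t m v a j
      then (push s t (m^2) c j, a(j := 1), lprime s t m j)
      else (c, a, j + 1)))"

text \<open>State after step (1), step (2), and k iterations of the loop body.\<close>
definition block_state :: "nat \<Rightarrow> nat \<Rightarrow> nat \<Rightarrow> (nat \<Rightarrow> int) \<Rightarrow> (nat \<Rightarrow> real) \<Rightarrow> nat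
    \<Rightarrow> (nat \<Rightarrow> real) \<times> (nat \<Rightarrow> int) \<times> nat" where
  "block_state s t m v c0 k =
     (block_step s t m v ^^ k) (push s t (m^2) c0 (m^2 - 1), (\<lambda>_. 0), 0)"

definition block_j :: "nat \<Rightarrow> nat \<Rightarrow> nat \<Rightarrow> (nat \<Rightarrow> int) \<Rightarrow> (nat \<Rightarrow> real) \<Rightarrow> nat \<Rightarrow> nat" where
  "block_j s t m v c0 k = snd (snd (block_state s t m v c0 k))"

definition block_pushes :: "nat \<Rightarrow> nat \<Rightarrow> nat \<Rightarrow> (nat \<Rightarrow> int) \<Rightarrow> (nat \<Rightarrow> real) \<Rightarrow> nat \<Rightarrow> nat \<Rightarrow> bool" where
  "block_pushes s t m v c0 k p \<longleftrightarrow>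
     (case block_state s t m v c0 k of (c, a, j) \<Rightarrow> j = p \<and> block_cond s t m v a j)"

end

theory Submission
  imports Defs
begin


lemma rfun_eq:
  assumes "0 < s" "s \<le> t" "m \<ge> t + 2" "i \<le> m - 3"
  shows "rfun s t (m^2) i = i + (t - 1 - i mod s)"
proof -
  have fl: "\<lfloor>real i / real s\<rfloor> = int (i div s)"
    by (metis floor_divide_of_nat_eq of_int_of_nat_eq)
  have d: "s * (i div s) + i mod s = i" by simp
  have ms: "i mod s < s" using assms(1) by simp
  have lt: "s * (i div s) + t - 1 < m^2"
  proof -
    have "s * (i div s) + t - 1 \<le> i + t" using d by linarith
    also have "\<dots> < 3 * m" using assms by linarith
    also have "\<dots> \<le> m * m" using assms by (intro mult_right_mono) auto
    finally show ?thesis by (simp add: power2_eq_square)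
  qed
  have ci: "int (s * (i div s) + t - 1) = int s * int (i div s) + int t - 1" using assms by auto
  have "(int s * int (i div s) + int t - 1) mod int (m^2) = int s * int (i div s) + int t - 1"
  proof (rule mod_pos_pos_trivial)
    have "int t \<ge> 1" using assms by linarith
    moreover have "int s * int (i div s) \<ge> 0" by simp
    ultimately show "0 \<le> int s * int (i div s) + int t - 1" by linarith
    have "int (s * (i div s) + t - 1) < int (m^2)" using lt by (simp only: of_nat_less_iff)
    then show "int s * int (i div s) + int t - 1 < int (m^2)" unfolding ci[symmetric] .
  qed
  then have "rfun s t (m^2) i = s * (i div s) + t - 1"
    unfolding rfun_def fl using ci by (metis nat_int)
  then show ?thesis using d ms assms by linarith
qed

lemma lprime_lt:
  assumes "0 < s" "s \<le> t" "m \<ge> t + 2" "j \<le> m - 3" "i < lprime s t m j"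
  shows "rfun s t (m^2) i < j"
proof -
  define q where "q = \<lceil>(real j - real t + 1) / real s\<rceil>"
  have sp: "real s > 0" using assms by simp
  have q1: "(real j - real t + 1) / real s \<le> of_int q" unfolding q_def by (rule le_of_int_ceiling)
  have q2: "of_int q - 1 < (real j - real t + 1) / real s" unfolding q_def by linarith
  from q1 sp have "real j - real t + 1 \<le> real s * of_int q" by (simp add: field_simps)
  then have "real_of_int (int j - int t + 1) \<le> real_of_int (int s * q)" by simp
  then have i1: "int j - int t + 1 \<le> int s * q" by (simp only: of_int_le_iff)
  from q2 sp have "real s * (of_int q - 1) < real j - real t + 1" by (simp add: field_simps)
  then have "real_of_int (int s * (q - 1)) < real_of_int (int j - int t + 1)" by simp
  then have i2: "int s * (q - 1) < int j - int t + 1" by (simp only: of_int_less_iff)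
  have lp: "lfun s t (m^2) j \<le> m - 3" and il: "i < lfun s t (m^2) j"
    using assms(5) unfolding lprime_def by (auto split: if_splits)
  have mm: "int (m^2) = int m * int m" by (simp add: power2_eq_square)
  have m3: "m \<ge> 3" using assms by linarith
  have lf: "lfun s t (m^2) j = nat ((int s * q) mod int (m^2))" unfolding lfun_def q_def by simp
  have mq: "int m * int m \<ge> 3 * int m" using m3 by (intro mult_right_mono) auto
  have nn: "int s * q \<ge> 0"
  proof (rule ccontr)
    assume neg: "\<not> int s * q \<ge> 0"
    have "(int s * q + int (m^2)) mod int (m^2) = int s * q + int (m^2)"
      apply (rule mod_pos_pos_trivial)
      using neg i1 assms mm m3 mq by linarith+
    then have "(int s * q) mod int (m^2) = int s * q + int (m^2)" by simp
    then show False using lp lf i1 mm mq assms by linarith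
  qed
  have "(int s * q) mod int (m^2) = int s * q"
  proof (rule mod_pos_pos_trivial)
    show "0 \<le> int s * q" by (rule nn)
    have "int s * q < int j - int t + 1 + int s" using i2 by (simp add: algebra_simps)
    then show "int s * q < int (m^2)" using assms mm mq by linarith
  qed
  then have lq: "int i < int s * q" using il lf nn by linarith
  have "s * (i div s) \<le> i" using mult_div_mod_eq[of s i] by linarith
  then have "int s * int (i div s) \<le> int i" by (metis of_nat_le_iff of_nat_mult)
  then have "int s * int (i div s) < int s * q" using lq by linarith
  then have "int (i div s) < q" using assms(1) by (simp add: mult_less_cancel_left)
  then have "int (i div s) \<le> q - 1" by linarith
  then have "int s * int (i div s) \<le> int s * (q - 1)" using assms(1) by (simp add: mult_left_mono)
  then have k: "int s * int (i div s) + int t - 1 < int j" using i2 by linarith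
  have "i \<le> m - 3" using il lp by linarith
  then have "rfun s t (m^2) i = i + (t - 1 - i mod s)" using rfun_eq assms by blast
  moreover have "s * (i div s) + i mod s = i" by simp
  moreover have "i mod s < s" using assms(1) by simp
  moreover have "int (s * (i div s) + t) < int (j + 1)" using k by simp
  then have "s * (i div s) + t < j + 1" by (simp only: of_nat_less_iff)
  ultimately show ?thesis using assms(2) by linarith
qed

lemma tail_zero:
  assumes "0 < s" "s \<le> t" "s dvd m" "m \<ge> t + 2" "i \<le> m - 3" "rfun s t (m^2) i > m - 3"
  shows "int m - int s * (\<lceil>real (t + 2) / real s\<rceil> - 1) \<le> int i"
proof -
  define Q where "Q = \<lceil>real (t + 2) / real s\<rceil>"
  have "real (t+2) / real s \<le> of_int Q" unfolding Q_def by (rule le_of_int_ceiling)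
  then have "real (t+2) \<le> real s * of_int Q" using assms(1) by (simp add: field_simps)
  then have "real_of_int (int t + 2) \<le> real_of_int (int s * Q)" by simp
  then have q: "int t + 2 \<le> int s * Q" by (simp only: of_int_le_iff)
  obtain M where M: "m = s * M" using assms(3) by blast
  have r: "rfun s t (m^2) i = i + (t - 1 - i mod s)" using rfun_eq assms by blast
  have d: "s * (i div s) + i mod s = i" by simp
  have ms: "i mod s < s" using assms(1) by simp
  have "s * (i div s) + t + 2 > m" using r d ms assms by linarith
  then have "int s * int (i div s) + int t + 2 > int s * int M" using M by (metis of_nat_add of_nat_less_iff of_nat_mult of_nat_numeral)
  then have "int s * int (i div s) > int s * (int M - Q)" using q by (simp add: algebra_simps)
  then have "int (i div s) > int M - Q" using assms(1) by (simp add: mult_less_cancel_left)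
  then have "int (i div s) \<ge> int M - Q + 1" by linarith
  then have "int s * int (i div s) \<ge> int s * (int M - Q + 1)" using assms(1) by (simp add: mult_left_mono)
  moreover have "s * (i div s) \<le> i" using d by linarith
  then have "int s * int (i div s) \<le> int i" by (metis of_nat_le_iff of_nat_mult)
  ultimately show ?thesis unfolding Q_def[symmetric] using M by (simp add: algebra_simps)
qed




lemma sum_upd:
  fixes a :: "nat \<Rightarrow> int"
  assumes "finite F"
  shows "(\<Sum>x\<in>F. (a(j:=y)) x) = (\<Sum>x\<in>F. a x) + (if j \<in> F then y - a j else 0)"
proof (cases "j \<in> F")
  case True
  have "(\<Sum>x\<in>F. (a(j:=y)) x) = (a(j:=y)) j + (\<Sum>x\<in>F-{j}. (a(j:=y)) x)"
    using sum.remove[OF assms True] by blast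
  also have "(\<Sum>x\<in>F-{j}. (a(j:=y)) x) = (\<Sum>x\<in>F-{j}. a x)" by (rule sum.cong) auto
  also have "(\<Sum>x\<in>F. a x) = a j + (\<Sum>x\<in>F-{j}. a x)"
    using sum.remove[OF assms True] by blast
  ultimately show ?thesis using True by simp
next
  case False
  then have "(\<Sum>x\<in>F. (a(j:=y)) x) = (\<Sum>x\<in>F. a x)" by (intro sum.cong) auto
  then show ?thesis using False by simp
qed

lemma step_eqs:
  "fst (snd (block_step s t m v (c,a,j))) = (if block_cond s t m v a j then a(j:=1) else a)"
  "snd (snd (block_step s t m v (c,a,j))) = (if block_cond s t m v a j then lprime s t m j else j+1)"
  by (auto simp: block_step_def)

definition Aof where "Aof s t m v c k = fst (snd (block_state s t m v c k))"

lemma state_Suc: "block_state s t m v c (Suc k) = block_step s t m v (block_state s t m v c k)"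
  by (simp add: block_state_def)

lemma A_Suc: "Aof s t m v c (Suc k) = (if block_cond s t m v (Aof s t m v c k) (block_j s t m v c k)
     then (Aof s t m v c k)(block_j s t m v c k := 1) else Aof s t m v c k)"
  unfolding Aof_def block_j_def state_Suc
  by (metis prod.collapse step_eqs(1))

lemma J_Suc: "block_j s t m v c (Suc k) = (if block_cond s t m v (Aof s t m v c k) (block_j s t m v c k)
     then lprime s t m (block_j s t m v c k) else block_j s t m v c k + 1)"
  unfolding Aof_def block_j_def state_Suc
  by (metis prod.collapse step_eqs(2))

lemma A0: "Aof s t m v c 0 = (\<lambda>_. 0)" and J0: "block_j s t m v c 0 = 0"
  by (simp_all add: Aof_def block_j_def block_state_def)

lemma pushes_eq: "block_pushes s t m v c k p \<longleftrightarrow>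
   block_j s t m v c k = p \<and> block_cond s t m v (Aof s t m v c k) (block_j s t m v c k)"
  unfolding block_pushes_def Aof_def block_j_def
  by (cases "block_state s t m v c k") auto

lemma A_nz_iff: "Aof s t m v c k p \<noteq> 0 \<longleftrightarrow> (\<exists>i<k. block_pushes s t m v c i p)"
proof (induction k)
  case 0 then show ?case by (simp add: A0)
next
  case (Suc k)
  show ?case
    unfolding A_Suc pushes_eq using Suc.IH unfolding pushes_eq
    by (auto simp: less_Suc_eq)
qed

lemma rprime_le: "rprime s t m i \<le> m - 3" "rprime s t m i \<le> rfun s t (m^2) i"
  unfolding rprime_def by auto

context
  fixes s t m :: nat and v :: "nat \<Rightarrow> int" and c :: "nat \<Rightarrow> real"
  assumes s0: "0 < s" and st: "s \<le> t" and mt: "m \<ge> t + 2"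
    and vb: "\<forall>j<m. 0 \<le> v j \<and> v j \<le> int t - 1 - int (j mod s)"
    and sm: "s dvd m"
    and vz: "\<forall>j<m. int m - int s * (\<lceil>real (t + 2) / real s\<rceil> - 1) \<le> int j \<longrightarrow> v j = 0"
begin

abbreviation "A \<equiv> Aof s t m v c"
abbreviation "J \<equiv> block_j s t m v c"
abbreviation "S a i \<equiv> (\<Sum>x\<in>{i+1..rprime s t m i}. a x)"

definition Inv where "Inv k \<longleftrightarrow> J k \<le> m - 2 \<and> (\<forall>i. A k i = 0 \<or> A k i = 1) \<and>
   (\<forall>i\<le>m-3. A k i = 0 \<longrightarrow> S (A k) i \<le> v i) \<and> (\<forall>i<J k. A k i = 0 \<longrightarrow> S (A k) i < v i)"

lemma m3: "m \<ge> 3" using s0 st mt by linarith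

lemma Inv_step:
  assumes I: "Inv k" and nj: "J k \<noteq> m - 2"
  shows "Inv (Suc k)"
proof -
  define a where "a = A k"
  define j where "j = J k"
  have I1: "J k \<le> m - 2" using I unfolding Inv_def by (elim conjE)
  have I2: "\<forall>i. a i = 0 \<or> a i = 1" using I unfolding Inv_def a_def by (elim conjE)
  have I3: "\<forall>i\<le>m-3. a i = 0 \<longrightarrow> S a i \<le> v i" using I unfolding Inv_def a_def by (elim conjE)
  have I4: "\<forall>i<j. a i = 0 \<longrightarrow> S a i < v i" using I unfolding Inv_def a_def j_def by (elim conjE)
  have jm: "j \<le> m - 3" using I1 nj m3 unfolding j_def by linarith
  show ?thesis
  proof (cases "block_cond s t m v a j")
    case True
    then have aj: "a j = 0" and sj: "S a j = v j" unfolding block_cond_def by auto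
    have As: "A (Suc k) = a(j:=1)" and Js: "J (Suc k) = lprime s t m j"
      using True A_Suc[of s t m v c k] J_Suc[of s t m v c k] unfolding a_def j_def by simp_all
    have Supd: "S (a(j:=1)) i = S a i + (if j \<in> {i+1..rprime s t m i} then 1 else 0)" for i
      using sum_upd[of "{i+1..rprime s t m i}" a j 1] aj by simp
    have c1: "lprime s t m j \<le> m - 2" unfolding lprime_def using m3 by auto
    have c2: "\<forall>i. (a(j:=1)) i = 0 \<or> (a(j:=1)) i = 1" using I2 by simp
    have c3: "S (a(j:=1)) i \<le> v i" if "i \<le> m - 3" "(a(j:=1)) i = 0" for i
    proof -
      have ij: "i \<noteq> j" and ai: "a i = 0" using that by (auto split: if_splits)
      show ?thesis
      proof (cases "i < j")
        case True
        then have "S a i < v i" using I4 ai by blast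
        then show ?thesis unfolding Supd by simp
      next
        case False
        then have "j \<notin> {i+1..rprime s t m i}" using ij by auto
        moreover have "S a i \<le> v i" using I3 ai that(1) by blast
        ultimately show ?thesis unfolding Supd by auto
      qed
    qed
    have c4: "S (a(j:=1)) i < v i" if "i < lprime s t m j" "(a(j:=1)) i = 0" for i
    proof -
      have r: "rfun s t (m^2) i < j" using lprime_lt[OF s0 st mt jm] that(1) by blast
      have "i \<le> m - 3" using that(1) unfolding lprime_def by (auto split: if_splits)
      then have "i \<le> rfun s t (m^2) i" using rfun_eq[OF s0 st mt] by simp
      then have ij: "i < j" using r by linarith
      have ai: "a i = 0" using that ij by (auto split: if_splits)
      have "j \<notin> {i+1..rprime s t m i}" using r rprime_le(2)[of s t m i] by auto
      moreover have "S a i < v i" using I4 ai ij by blast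
      ultimately show ?thesis unfolding Supd by auto
    qed
    show ?thesis unfolding Inv_def As Js
    proof (intro conjI)
      show "lprime s t m j \<le> m - 2" by (rule c1)
      show "\<forall>i. (a(j:=1)) i = 0 \<or> (a(j:=1)) i = 1" by (rule c2)
      show "\<forall>i\<le>m-3. (a(j:=1)) i = 0 \<longrightarrow> S (a(j:=1)) i \<le> v i" using c3 by blast
      show "\<forall>i<lprime s t m j. (a(j:=1)) i = 0 \<longrightarrow> S (a(j:=1)) i < v i" using c4 by blast
    qed
  next
    case nc: False
    have As: "A (Suc k) = a" and Js: "J (Suc k) = j + 1"
      using nc A_Suc[of s t m v c k] J_Suc[of s t m v c k] unfolding a_def j_def by simp_all
    have c4: "S a i < v i" if "i < j + 1" "a i = 0" for i
    proof (cases "i < j")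
      case True then show ?thesis using I4 that by blast
    next
      case False
      then have ii: "i = j" using that by simp
      have "S a j \<le> v j" using I3 jm that(2) ii by blast
      moreover have "S a j \<noteq> v j" using nc[unfolded block_cond_def] that(2) ii by auto
      ultimately show ?thesis using ii by simp
    qed
    show ?thesis unfolding Inv_def As Js
    proof (intro conjI)
      show "j + 1 \<le> m - 2" using jm m3 by linarith
      show "\<forall>i. a i = 0 \<or> a i = 1" by (rule I2)
      show "\<forall>i\<le>m-3. a i = 0 \<longrightarrow> S a i \<le> v i" by (rule I3)
      show "\<forall>i<j+1. a i = 0 \<longrightarrow> S a i < v i" using c4 by blast
    qed
  qed
qed

lemma Inv0: "Inv 0"
  unfolding Inv_def A0 J0 using vb m3 by auto

lemma Inv_all: "(\<forall>i<k. J i \<noteq> m - 2) \<Longrightarrow> Inv k"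
proof (induction k)
  case 0 show ?case by (rule Inv0)
next
  case (Suc k) then show ?case using Inv_step by auto
qed

definition U where "U k = card {i\<in>{0..m-3}. A k i = 0}"
definition mu where "mu k = (m - 1) * U k + (m - 2 - J k)"

lemma mu_dec:
  assumes I: "Inv k" and nj: "J k \<noteq> m - 2"
  shows "mu (Suc k) < mu k"
proof -
  define a where "a = A k"
  define j where "j = J k"
  have "J k \<le> m - 2" using I unfolding Inv_def by (elim conjE)
  then have jm: "j \<le> m - 3" using nj m3 unfolding j_def by linarith
  show ?thesis
  proof (cases "block_cond s t m v a j")
    case True
    then have aj: "a j = 0" unfolding block_cond_def by auto
    have As: "A (Suc k) = a(j:=1)" and Js: "J (Suc k) = lprime s t m j"
      using True unfolding a_def j_def by (simp_all add: A_Suc J_Suc)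
    have e: "{i\<in>{0..m-3}. A (Suc k) i = 0} = {i\<in>{0..m-3}. a i = 0} - {j}"
      unfolding As by auto
    have jin: "j \<in> {i\<in>{0..m-3}. a i = 0}" using aj jm by auto
    have "U (Suc k) = U k - 1" unfolding U_def e a_def
      using jin[unfolded a_def] by (simp add: card_Diff_singleton)
    moreover have "U k \<ge> 1" unfolding U_def a_def[symmetric]
    proof -
      have "card {i\<in>{0..m-3}. a i = 0} > 0" using jin by (subst card_gt_0_iff) auto
      then show "card {i\<in>{0..m-3}. a i = 0} \<ge> 1" by linarith
    qed
    moreover have "m - 2 - J (Suc k) \<le> m - 2" by simp
    moreover have "m - 2 - J k < m - 1" using m3 by linarith
    ultimately show ?thesis unfolding mu_def
    proof -
      assume u1: "U (Suc k) = U k - 1" and u2: "U k \<ge> 1" and x1: "m - 2 - J (Suc k) \<le> m - 2"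
      obtain u where u: "U k = Suc u" using u2 by (cases "U k") auto
      have e1: "(m - 1) * U k = (m - 1) * u + (m - 1)" unfolding u by simp
      have e2: "U (Suc k) = u" using u1 u by simp
      show "(m - 1) * U (Suc k) + (m - 2 - J (Suc k)) < (m - 1) * U k + (m - 2 - J k)"
        unfolding e1 e2 using x1 m3 by linarith
    qed
  next
    case False
    have As: "A (Suc k) = a" and Js: "J (Suc k) = j + 1"
      using False unfolding a_def j_def by (simp_all add: A_Suc J_Suc)
    show ?thesis unfolding mu_def U_def As Js a_def j_def using jm[unfolded j_def] m3 by auto
  qed
qed

lemma mu_bound: "(\<forall>i<k. J i \<noteq> m - 2) \<Longrightarrow> mu k + k \<le> mu 0"
proof (induction k)
  case 0 then show ?case by simp
next
  case (Suc k)
  then have "Inv k" "J k \<noteq> m - 2" using Inv_all by auto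
  then have "mu (Suc k) < mu k" by (rule mu_dec)
  then show ?case using Suc by auto
qed

lemma terminates: "\<exists>k. J k = m - 2"
proof (rule ccontr)
  assume "\<not> ?thesis"
  then have "mu (Suc (mu 0)) + Suc (mu 0) \<le> mu 0" using mu_bound by blast
  then show False by simp
qed

lemma all_pushed:
  assumes I: "Inv k" and JK: "J k = m - 2" and pm: "p \<le> m - 3"
  shows "A k p \<noteq> 0"
proof (rule ccontr)
  assume "\<not> A k p \<noteq> 0"
  define B where "B = {i. i \<le> m - 3 \<and> A k i = 0}"
  have fB: "finite B" unfolding B_def by auto
  have pB: "p \<in> B" unfolding B_def using pm \<open>\<not> A k p \<noteq> 0\<close> by auto
  define i where "i = Max B"
  have iB: "i \<in> B" unfolding i_def using fB pB Max_in by blast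
  have imax: "x \<le> i" if "x \<in> B" for x unfolding i_def using fB that by simp
  have im: "i \<le> m - 3" and ai: "A k i = 0" using iB unfolding B_def by auto
  have ones: "A k x = 1" if "x \<in> {i+1..rprime s t m i}" for x
  proof -
    have "x \<le> m - 3" using that rprime_le(1)[of s t m i] by auto
    moreover have "x \<notin> B" using imax that by fastforce
    ultimately have "A k x \<noteq> 0" unfolding B_def by auto
    then show ?thesis using I unfolding Inv_def by blast
  qed
  have "S (A k) i = (\<Sum>x\<in>{i+1..rprime s t m i}. 1)" using ones by (intro sum.cong) auto
  also have "\<dots> = int (rprime s t m i - i)" by simp
  finally have Se: "S (A k) i = int (rprime s t m i - i)" .
  have "i < J k" using im JK m3 by linarith
  then have lt: "S (A k) i < v i" using I ai unfolding Inv_def by blast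
  have rf: "rfun s t (m^2) i = i + (t - 1 - i mod s)" using rfun_eq[OF s0 st mt im] .
  have imt: "i < m" using im m3 by linarith
  show False
  proof (cases "rfun s t (m^2) i \<le> m - 3")
    case True
    then have "rprime s t m i = i + (t - 1 - i mod s)" unfolding rprime_def rf by simp
    then have "S (A k) i = int (t - 1 - i mod s)" using Se by simp
    moreover have "i mod s < s" using s0 by simp
    ultimately have "S (A k) i = int t - 1 - int (i mod s)" using st by linarith
    then show False using lt vb imt by fastforce
  next
    case False
    then have "v i = 0" using vz imt tail_zero[OF s0 st sm mt im] by auto
    then show False using lt Se by simp
  qed
qed

end



theorem lemma8:
  fixes s t m :: nat and v :: "nat \<Rightarrow> int" and c :: "nat \<Rightarrow> real"
  assumes "0 < s" and "s \<le> t" and "s dvd m" and "m \<ge> t + 2"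
    and "\<forall>j<m. 0 \<le> v j \<and> v j \<le> int t - 1 - int (j mod s)"
    and "\<forall>j<m. int m - int s * (\<lceil>real (t + 2) / real s\<rceil> - 1) \<le> int j \<longrightarrow> v j = 0"
    and "inj_on c {0..<m^2}"
  shows "\<exists>K. block_j s t m v c K = m - 2 \<and> (\<forall>i<K. block_j s t m v c i \<noteq> m - 2) \<and>
           (\<forall>p\<in>{0..m-3}. card {i. i < K \<and> block_pushes s t m v c i p} = 1)"
proof -
  note ctx = assms(1) assms(2) assms(4) assms(5) assms(3) assms(6)
  define K where "K = (LEAST k. block_j s t m v c k = m - 2)"
  have ex: "\<exists>k. block_j s t m v c k = m - 2" by (rule terminates[OF ctx])
  have JK: "block_j s t m v c K = m - 2" unfolding K_def using ex by (rule LeastI_ex)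
  have bef: "\<forall>i<K. block_j s t m v c i \<noteq> m - 2" unfolding K_def using not_less_Least by blast
  have IK: "Inv s t m v c K" using Inv_all[OF ctx] bef by blast
  have "card {i. i < K \<and> block_pushes s t m v c i p} = 1" if pm: "p \<in> {0..m-3}" for p
  proof -
    have "Aof s t m v c K p \<noteq> 0" using all_pushed[OF ctx IK JK] pm by auto
    then obtain i0 where i0: "i0 < K" "block_pushes s t m v c i0 p" using A_nz_iff by blast
    have uniq: "i = i0" if "i < K" "block_pushes s t m v c i p" for i
    proof (rule ccontr)
      assume ne: "i \<noteq> i0"
      have key: "False" if "a < b" "block_pushes s t m v c a p" "block_pushes s t m v c b p" for a b
      proof -
        have "Aof s t m v c b p \<noteq> 0" using A_nz_iff that(1,2) by blast
        moreover have "Aof s t m v c b p = 0"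
          using that(3) unfolding pushes_eq block_cond_def by auto
        ultimately show False by simp
      qed
      show False
      proof (cases "i < i0")
        case True then show False using key that i0 by blast
      next
        case False then have "i0 < i" using ne by simp
        then show False using key that i0 by blast
      qed
    qed
    have "{i. i < K \<and> block_pushes s t m v c i p} = {i0}" using i0 uniq by blast
    then show ?thesis by simp
  qed
  then show ?thesis using JK bef by blast
qed

end
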